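(* Let $w=\mu^{\omega}(a)$ where $\mu$ is an injective $r$-uniform morphism ($r\ge 2$) on a finite alphabet $A$, prolongable on $a\in A$. Suppose $w$ is eventually periodic. Then the (minimal) period of $w$ is not divisible by $r$.
   Context: A morphism $\mu$ satisfies $\mu(uv)=\mu(u)\mu(v)$ for finite $u$; it is $r$-uniform if $|\mu(b)|=r$ for all letters $b$; prolongable on $a$ means $\mu(a)$ begins with $a$, and $\mu^{\omega}(a)$ is the infinite word having every $\mu^n(a)$ as a prefix. An infinite word $w$ is eventually periodic if there is an integer $n$ such that deleting the first $n$ letters of $w$ yields a periodic word; its period is the minimal period of that periodic suffix. *)

theory Defs
  imports Main
begin

definition morph :: "('a \<Rightarrow> 'a list) \<Rightarrow> 'a list \<Rightarrow> 'a list" where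
  "morph \<mu> u = concat (map \<mu> u)"

definition uniform_morph :: "'a set \<Rightarrow> nat \<Rightarrow> ('a \<Rightarrow> 'a list) \<Rightarrow> bool" where
  "uniform_morph A r \<mu> \<longleftrightarrow> (\<forall>b\<in>A. length (\<mu> b) = r)"

definition prolongable :: "('a \<Rightarrow> 'a list) \<Rightarrow> 'a \<Rightarrow> bool" where
  "prolongable \<mu> a \<longleftrightarrow> \<mu> a \<noteq> [] \<and> hd (\<mu> a) = a"

definition is_mu_omega :: "('a \<Rightarrow> 'a list) \<Rightarrow> 'a \<Rightarrow> (nat \<Rightarrow> 'a) \<Rightarrow> bool" where
  "is_mu_omega \<mu> a w \<longleftrightarrow>
     (\<forall>n. \<forall>i < length ((morph \<mu> ^^ n) [a]). w i = ((morph \<mu> ^^ n) [a]) ! i)"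

definition eventually_periodic :: "(nat \<Rightarrow> 'a) \<Rightarrow> bool" where
  "eventually_periodic w \<longleftrightarrow> (\<exists>n p. p > 0 \<and> (\<forall>i\<ge>n. w (i + p) = w i))"

definition ev_period :: "(nat \<Rightarrow> 'a) \<Rightarrow> nat" where
  "ev_period w = (LEAST p. p > 0 \<and> (\<exists>n. \<forall>i\<ge>n. w (i + p) = w i))"

end

theory Submission
  imports Defs
begin

lemma concat_uniform_nth:
  assumes "\<forall>x\<in>set xs. length (\<mu> x) = r" "k < length xs" "j < r"
  shows "concat (map \<mu> xs) ! (r*k+j) = \<mu> (xs!k) ! j"
  using assms
proof (induction xs arbitrary: k)
  case Nil then show ?case by simp
next
  case (Cons x xs)
  show ?case
  proof (cases k)
    case 0 then show ?thesis using Cons.prems by (simp add: nth_append)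
  next
    case (Suc k')
    have "r*k+j = r + (r*k'+j)" using Suc by simp
    then show ?thesis using Cons Suc by (simp add: nth_append)
  qed
qed

lemma sum_list_const_len:
  "\<forall>x\<in>set xs. length (\<mu> x) = r \<Longrightarrow> sum_list (map (length \<circ> \<mu>) xs) = r * length xs"
  by (induction xs) auto

theorem lemma10:
  fixes A :: "'a set" and \<mu> :: "'a \<Rightarrow> 'a list" and a :: 'a and r :: nat
    and w :: "nat \<Rightarrow> 'a"
  assumes "finite A"
    and "a \<in> A"
    and "\<forall>b\<in>A. set (\<mu> b) \<subseteq> A"
    and "r \<ge> 2"
    and "uniform_morph A r \<mu>"
    and "inj_on (morph \<mu>) (lists A)"
    and "prolongable \<mu> a"
    and "is_mu_omega \<mu> a w"
    and "eventually_periodic w"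
  shows "\<not> r dvd ev_period w"
proof
  define u where "u n = (morph \<mu> ^^ n) [a]" for n
  have uS: "u (Suc n) = concat (map \<mu> (u n))" for n
    by (simp add: u_def morph_def)
  have uA: "set (u n) \<subseteq> A \<and> length (u n) = r ^ n" for n
  proof (induction n)
    case 0 then show ?case using assms(2) by (simp add: u_def)
  next
    case (Suc n)
    have "\<forall>x\<in>set (u n). length (\<mu> x) = r"
      using Suc assms(5) unfolding uniform_morph_def by auto
    then have "length (u (Suc n)) = r * length (u n)"
      unfolding uS by (simp add: length_concat sum_list_const_len)
    moreover have "set (u (Suc n)) \<subseteq> A" unfolding uS using Suc assms(3) by auto
    ultimately show ?case using Suc by simp
  qed
  have wu: "i < r ^ n \<Longrightarrow> w i = u n ! i" for i n
    using assms(8) uA unfolding is_mu_omega_def u_def by metis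
  have big: "k < r ^ k" for k
  proof -
    have "k < 2 ^ k" by (rule less_exp)
    also have "(2::nat) ^ k \<le> r ^ k" using assms(4) by (rule power_mono) simp
    finally show ?thesis .
  qed
  have wA: "w i \<in> A" for i
  proof -
    have "w i = u i ! i" using wu big by blast
    then show ?thesis using uA[of i] big[of i] by (metis nth_mem subsetD)
  qed
  have wblk: "w (r*k+j) = \<mu> (w k) ! j" if "j < r" for k j
  proof -
    have "r*k+j < r*(Suc k)" using that by simp
    also have "r * Suc k \<le> r * r^k" using big[of k] by (intro mult_le_mono2) simp
    finally have "r*k+j < r * r^k" .
    then have "w (r*k+j) = u (Suc k) ! (r*k+j)" using wu by simp
    also have "\<dots> = \<mu> (u k ! k) ! j" unfolding uS
      using concat_uniform_nth[of "u k" \<mu> r k j] uA[of k] assms(5) big[of k] that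
      unfolding uniform_morph_def by auto
    also have "u k ! k = w k" using wu big by metis
    finally show ?thesis .
  qed
  define p where "p = ev_period w"
  obtain n0 p0 where "p0 > 0" "\<forall>i\<ge>n0. w (i + p0) = w i"
    using assms(9) unfolding eventually_periodic_def by blast
  then have ex: "p0 > 0 \<and> (\<exists>n. \<forall>i\<ge>n. w (i + p0) = w i)" by blast
  have pP: "p > 0 \<and> (\<exists>n. \<forall>i\<ge>n. w (i + p) = w i)"
    unfolding p_def ev_period_def by (rule LeastI[where P="\<lambda>p. p > 0 \<and> (\<exists>n. \<forall>i\<ge>n. w (i + p) = w i)", OF ex])
  then obtain n where n: "\<forall>i\<ge>n. w (i + p) = w i" by blast
  assume "r dvd ev_period w"
  then obtain q where q: "p = r * q" unfolding p_def by blast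
  have qpos: "q > 0" using pP q by auto
  have qlt: "q < p" using q qpos assms(4) by simp
  have per: "w (k + q) = w k" if "k \<ge> n" for k
  proof -
    have "\<mu> (w (k+q)) = \<mu> (w k)"
    proof (rule nth_equalityI)
      show "length (\<mu> (w (k+q))) = length (\<mu> (w k))"
        using assms(5) wA unfolding uniform_morph_def by simp
    next
      fix j assume "j < length (\<mu> (w (k+q)))"
      then have j: "j < r" using assms(5) wA unfolding uniform_morph_def by simp
      have "k \<le> r*k" using assms(4) by simp
      then have "r*k + j \<ge> n" using that by linarith
      then have "w (r*k+j + p) = w (r*k+j)" using n by blast
      moreover have "r*k+j+p = r*(k+q)+j" using q by (simp add: algebra_simps)
      ultimately show "\<mu> (w (k+q)) ! j = \<mu> (w k) ! j" using wblk[OF j] by metis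
    qed
    then have "morph \<mu> [w (k+q)] = morph \<mu> [w k]" by (simp add: morph_def)
    then have "[w (k+q)] = [w k]"
      using assms(6) wA by (auto dest: inj_onD)
    then show ?thesis by simp
  qed
  have "q > 0 \<and> (\<exists>n. \<forall>i\<ge>n. w (i + q) = w i)" using qpos per by blast
  then have "p \<le> q" unfolding p_def ev_period_def by (rule Least_le[where P="\<lambda>p. p > 0 \<and> (\<exists>n. \<forall>i\<ge>n. w (i + p) = w i)"])
  then show False using qlt by simp
qed

end
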